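(* Consider a common interest game and fix, for each $i$, parameters $\lambda^i\in[0,1]$, $\gamma^i,\kappa^i\in(0,1)$ and a stochastic kernel $h^i\in\mathcal{P}(\Pi^i\mid\Pi^i\times 2^{\Pi^i})$. Let $\{\bm{\pi}_k\}_{k\ge0}$ be the time-homogeneous Markov chain on $\bm{\Pi}$ generated by the Idealized Update Procedure (defined in the context), with transition matrix $A_{\bm{\gamma},\bm{\kappa},\mathbf{h}}$, where $\bm{\gamma}=(\gamma^i)_i$, $\bm{\kappa}=(\kappa^i)_i$, $\mathbf{h}=(h^i)_i$. Then this chain has a unique stationary distribution $\mu^*_{\bm{\gamma},\bm{\kappa},\mathbf{h}}$, and for every $\mu_0\in\mathcal{P}(\bm{\Pi})$, $\lim_{n\to\infty}\mu_0A^n_{\bm{\gamma},\bm{\kappa},\mathbf{h}}=\mu^*_{\bm{\gamma},\bm{\kappa},\mathbf{h}}$. Moreover, for every $\epsilon\in(0,1)$ and every $\bm{\kappa}\in(0,1)^N$ there exists $\bar{\gamma}_\epsilon(\bm{\kappa})>0$ such that, if $\gamma^i\in(0,\bar{\gamma}_\epsilon(\bm{\kappa}))$ for all $i$ (and for every choice of $\lambda^i$ and $h^i$), then \[ \mu^*_{\bm{\gamma},\bm{\kappa},\mathbf{h}}(\bm{\Pi}_{\rm opt})\ge 1-\epsilon/2 . \]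
   Context: Game setup: a finite discounted stochastic game with $N$ decision makers, finite state set $\mathbb{X}$, finite action sets $\mathbb{U}^i$, discount factors $\beta^i\in(0,1)$, costs $c^i:\mathbb{X}\times\mathbb{U}\to\mathbb{R}$ ($\mathbb{U}=\times_i\mathbb{U}^i$), and transition kernel $P(\cdot\mid x,\mathbf{u})$. $\Pi^i$ is the (finite) set of maps $\mathbb{X}\to\mathbb{U}^i$, $\bm{\Pi}=\times_i\Pi^i$, $\bm{\Pi}^{-i}=\times_{j\neq i}\Pi^j$, $\bm{\pi}=(\pi^i,\bm{\pi}^{-i})$. $J^i_x(\bm{\pi})=E[\sum_{t\ge0}(\beta^i)^tc^i(x_t,\bm{\pi}(x_t))\mid x_0=x]$ with $x_{t+1}\sim P(\cdot\mid x_t,\bm{\pi}(x_t))$. $\pi^i\in\Pi^i$ is a best reply to $\bm{\pi}^{-i}$ if $J^i_x(\pi^i,\bm{\pi}^{-i})=\min_{\sigma^i\in\Pi^i}J^i_x(\sigma^i,\bm{\pi}^{-i})$ for all $x$; $\mathrm{BR}^i(\bm{\pi}^{-i})\subseteq\Pi^i$ denotes the (nonempty) set of best replies. $\bm{\Pi}_{\rm opt}=\{\bm{\pi}^*:J^i_x(\bm{\pi}^* )=\inf_{\bm{\pi}\in\bm{\Pi}}J^i_x(\bm{\pi})\ \forall i,x\}$. Common interest game: $\bm{\Pi}_{\rm opt}\ne\emptyset$ and for all $\tilde{\bm{\pi}}\notin\bm{\Pi}_{\rm opt}$ and all $i$, $\inf_{\bm{\pi}}\sum_xJ^i_x(\bm{\pi})<\sum_xJ^i_x(\tilde{\bm{\pi}})$.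 Inertial best reply kernel: for $\lambda\in[0,1]$, $R^{i,\lambda}(\tilde\pi^i\mid\pi^i,B^i)$ equals $1$ if $\pi^i\in B^i$ and $\tilde\pi^i=\pi^i$; $\lambda$ if $\pi^i\notin B^i$ and $\tilde\pi^i=\pi^i$; $(1-\lambda)/|B^i|$ if $\pi^i\notin B^i$ and $\tilde\pi^i\in B^i$; $0$ otherwise ($\pi^i,\tilde\pi^i\in\Pi^i$, $B^i\subseteq\Pi^i$). $\mathcal{P}(\Pi^i\mid\Pi^i\times2^{\Pi^i})$ is the set of stochastic kernels assigning a probability distribution on $\Pi^i$ to each pair $(\pi^i,B^i)$. $\mathrm{Unif}(\Pi^i)$ is the uniform distribution. Idealized Update Procedure (IUP): given $\bm{\pi}_k$, the DMs choose $\pi^i_{{k+1}}$ conditionally independently: if $\bm{\pi}_k\in\bm{\Pi}_{\rm opt}$, $\pi^i_{k+1}\sim(1-\gamma^i)R^{i,\lambda^i}(\cdot\mid\pi^i_k,\mathrm{BR}^i(\bm{\pi}^{-i}_k))+\gamma^i\,\mathrm{Unif}(\Pi^i)$; if $\bm{\pi}_k\notin\bm{\Pi}_{\rm opt}$, $\pi^i_{k+1}\sim(1-\kappa^i)h^i(\cdot\mid\pi^i_k,\mathrm{BR}^i(\bm{\pi}^{-i}_k))+\kappa^i\,\mathrm{Unif}(\Pi^i)$. *)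

theory Defs
  imports "HOL-Analysis.Analysis"
begin

text \<open>Players are indexed by i < N. Actions of all players live in a common type 'u,
  player i's action set being Us i (finite, nonempty).
  The joint action at state x under joint policy pol is (\<lambda>j. pol j x).
  P x u y is the probability of moving from x to y under joint action u.\<close>

definition Pol :: "(nat \<Rightarrow> 'u set) \<Rightarrow> nat \<Rightarrow> ('x \<Rightarrow> 'u) set" where
  "Pol Us i = {f. \<forall>x. f x \<in> Us i}"

definition Pis :: "nat \<Rightarrow> (nat \<Rightarrow> 'u set) \<Rightarrow> (nat \<Rightarrow> 'x \<Rightarrow> 'u) set" where
  "Pis N Us = PiE {..<N} (Pol Us)"

definition joint_actions :: "nat \<Rightarrow> (nat \<Rightarrow> 'u set) \<Rightarrow> (nat \<Rightarrow> 'u) set" where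
  "joint_actions N Us = PiE {..<N} Us"

fun pstep :: "('x::finite \<Rightarrow> (nat \<Rightarrow> 'u) \<Rightarrow> 'x \<Rightarrow> real) \<Rightarrow> (nat \<Rightarrow> 'x \<Rightarrow> 'u) \<Rightarrow> nat \<Rightarrow> 'x \<Rightarrow> 'x \<Rightarrow> real" where
  "pstep P pol 0 x y = (if x = y then 1 else 0)"
| "pstep P pol (Suc n) x y = (\<Sum>z\<in>UNIV. pstep P pol n x z * P z (\<lambda>j. pol j z) y)"

definition J :: "(nat \<Rightarrow> real) \<Rightarrow> (nat \<Rightarrow> 'x::finite \<Rightarrow> (nat \<Rightarrow> 'u) \<Rightarrow> real)
    \<Rightarrow> ('x \<Rightarrow> (nat \<Rightarrow> 'u) \<Rightarrow> 'x \<Rightarrow> real) \<Rightarrow> nat \<Rightarrow> (nat \<Rightarrow> 'x \<Rightarrow> 'u) \<Rightarrow> 'x \<Rightarrow> real" where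
  "J beta c P i pol x =
     (\<Sum>t. beta i ^ t * (\<Sum>y\<in>UNIV. pstep P pol t x y * c i y (\<lambda>j. pol j y)))"

definition BR :: "(nat \<Rightarrow> 'u set) \<Rightarrow> (nat \<Rightarrow> real) \<Rightarrow> (nat \<Rightarrow> 'x::finite \<Rightarrow> (nat \<Rightarrow> 'u) \<Rightarrow> real)
    \<Rightarrow> ('x \<Rightarrow> (nat \<Rightarrow> 'u) \<Rightarrow> 'x \<Rightarrow> real) \<Rightarrow> nat \<Rightarrow> (nat \<Rightarrow> 'x \<Rightarrow> 'u) \<Rightarrow> ('x \<Rightarrow> 'u) set" where
  "BR Us beta c P i pol = {s \<in> Pol Us i. \<forall>x.
      J beta c P i (pol(i := s)) x = (MIN s' \<in> Pol Us i. J beta c P i (pol(i := s')) x)}"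

definition Pi_opt :: "nat \<Rightarrow> (nat \<Rightarrow> 'u set) \<Rightarrow> (nat \<Rightarrow> real) \<Rightarrow> (nat \<Rightarrow> 'x::finite \<Rightarrow> (nat \<Rightarrow> 'u) \<Rightarrow> real)
    \<Rightarrow> ('x \<Rightarrow> (nat \<Rightarrow> 'u) \<Rightarrow> 'x \<Rightarrow> real) \<Rightarrow> (nat \<Rightarrow> 'x \<Rightarrow> 'u) set" where
  "Pi_opt N Us beta c P = {p \<in> Pis N Us. \<forall>i<N. \<forall>x.
      J beta c P i p x = (INF q \<in> Pis N Us. J beta c P i q x)}"

definition common_interest :: "nat \<Rightarrow> (nat \<Rightarrow> 'u set) \<Rightarrow> (nat \<Rightarrow> real) \<Rightarrow> (nat \<Rightarrow> 'x::finite \<Rightarrow> (nat \<Rightarrow> 'u) \<Rightarrow> real)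
    \<Rightarrow> ('x \<Rightarrow> (nat \<Rightarrow> 'u) \<Rightarrow> 'x \<Rightarrow> real) \<Rightarrow> bool" where
  "common_interest N Us beta c P \<longleftrightarrow>
     Pi_opt N Us beta c P \<noteq> {} \<and>
     (\<forall>pt \<in> Pis N Us - Pi_opt N Us beta c P. \<forall>i<N.
        (INF p \<in> Pis N Us. \<Sum>x\<in>UNIV. J beta c P i p x) < (\<Sum>x\<in>UNIV. J beta c P i pt x))"

definition Rin :: "real \<Rightarrow> 'p \<Rightarrow> 'p set \<Rightarrow> 'p \<Rightarrow> real" where
  "Rin lam s B s' =
     (if s \<in> B then (if s' = s then 1 else 0)
      else if s' = s then lam
      else if s' \<in> B then (1 - lam) / real (card B)
      else 0)"

definition stoch_kernel :: "'p set \<Rightarrow> ('p \<Rightarrow> 'p set \<Rightarrow> 'p \<Rightarrow> real) \<Rightarrow> bool" where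
  "stoch_kernel S h \<longleftrightarrow> (\<forall>s\<in>S. \<forall>B. B \<subseteq> S \<longrightarrow>
      (\<forall>s'\<in>S. 0 \<le> h s B s') \<and> (\<Sum>s'\<in>S. h s B s') = 1)"

definition IUP_player :: "nat \<Rightarrow> (nat \<Rightarrow> 'u set) \<Rightarrow> (nat \<Rightarrow> real) \<Rightarrow> (nat \<Rightarrow> 'x::finite \<Rightarrow> (nat \<Rightarrow> 'u) \<Rightarrow> real)
    \<Rightarrow> ('x \<Rightarrow> (nat \<Rightarrow> 'u) \<Rightarrow> 'x \<Rightarrow> real)
    \<Rightarrow> (nat \<Rightarrow> real) \<Rightarrow> (nat \<Rightarrow> real) \<Rightarrow> (nat \<Rightarrow> real)
    \<Rightarrow> (nat \<Rightarrow> ('x \<Rightarrow> 'u) \<Rightarrow> ('x \<Rightarrow> 'u) set \<Rightarrow> ('x \<Rightarrow> 'u) \<Rightarrow> real)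
    \<Rightarrow> nat \<Rightarrow> (nat \<Rightarrow> 'x \<Rightarrow> 'u) \<Rightarrow> ('x \<Rightarrow> 'u) \<Rightarrow> real" where
  "IUP_player N Us beta c P lam gam kap h i p s =
     (if p \<in> Pi_opt N Us beta c P
      then (1 - gam i) * Rin (lam i) (p i) (BR Us beta c P i p) s + gam i / real (card (Pol Us i :: ('x \<Rightarrow> 'u) set))
      else (1 - kap i) * h i (p i) (BR Us beta c P i p) s + kap i / real (card (Pol Us i :: ('x \<Rightarrow> 'u) set)))"

text \<open>Transition matrix A of the IUP Markov chain on joint policies (players update
  conditionally independently).\<close>
definition IUP_matrix :: "nat \<Rightarrow> (nat \<Rightarrow> 'u set) \<Rightarrow> (nat \<Rightarrow> real) \<Rightarrow> (nat \<Rightarrow> 'x::finite \<Rightarrow> (nat \<Rightarrow> 'u) \<Rightarrow> real)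
    \<Rightarrow> ('x \<Rightarrow> (nat \<Rightarrow> 'u) \<Rightarrow> 'x \<Rightarrow> real)
    \<Rightarrow> (nat \<Rightarrow> real) \<Rightarrow> (nat \<Rightarrow> real) \<Rightarrow> (nat \<Rightarrow> real)
    \<Rightarrow> (nat \<Rightarrow> ('x \<Rightarrow> 'u) \<Rightarrow> ('x \<Rightarrow> 'u) set \<Rightarrow> ('x \<Rightarrow> 'u) \<Rightarrow> real)
    \<Rightarrow> (nat \<Rightarrow> 'x \<Rightarrow> 'u) \<Rightarrow> (nat \<Rightarrow> 'x \<Rightarrow> 'u) \<Rightarrow> real" where
  "IUP_matrix N Us beta c P lam gam kap h p q =
     (\<Prod>i<N. IUP_player N Us beta c P lam gam kap h i p (q i))"

definition is_dist :: "'p set \<Rightarrow> ('p \<Rightarrow> real) \<Rightarrow> bool" where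
  "is_dist S mu \<longleftrightarrow> (\<forall>p. 0 \<le> mu p) \<and> (\<forall>p. p \<notin> S \<longrightarrow> mu p = 0) \<and> sum mu S = 1"

definition stationary :: "'p set \<Rightarrow> ('p \<Rightarrow> 'p \<Rightarrow> real) \<Rightarrow> ('p \<Rightarrow> real) \<Rightarrow> bool" where
  "stationary S A mu \<longleftrightarrow> is_dist S mu \<and> (\<forall>q\<in>S. (\<Sum>p\<in>S. mu p * A p q) = mu q)"

fun dist_iter :: "'p set \<Rightarrow> ('p \<Rightarrow> 'p \<Rightarrow> real) \<Rightarrow> ('p \<Rightarrow> real) \<Rightarrow> nat \<Rightarrow> 'p \<Rightarrow> real" where
  "dist_iter S A mu0 0 = mu0"
| "dist_iter S A mu0 (Suc n) = (\<lambda>q. if q \<in> S then (\<Sum>p\<in>S. dist_iter S A mu0 n p * A p q) else 0)"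

definition finite_game :: "nat \<Rightarrow> (nat \<Rightarrow> 'u set) \<Rightarrow> (nat \<Rightarrow> real)
    \<Rightarrow> ('x::finite \<Rightarrow> (nat \<Rightarrow> 'u) \<Rightarrow> 'x \<Rightarrow> real) \<Rightarrow> bool" where
  "finite_game N Us beta P \<longleftrightarrow>
     (\<forall>i<N. finite (Us i) \<and> Us i \<noteq> {} \<and> 0 < beta i \<and> beta i < 1) \<and>
     (\<forall>x. \<forall>u\<in>joint_actions N Us. (\<forall>y. 0 \<le> P x u y) \<and> (\<Sum>y\<in>UNIV. P x u y) = 1)"

end

theory Submission
  imports Defs "HOL-Library.FuncSet"
begin


lemma contr:
  fixes S :: "'p set" and w :: "'p \<Rightarrow> real"
  assumes fin: "finite S" and pos: "\<And>p q. p\<in>S \<Longrightarrow> q\<in>S \<Longrightarrow> d \<le> A p q"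
    and rows: "\<And>p. p\<in>S \<Longrightarrow> (\<Sum>q\<in>S. A p q) = 1"
    and w0: "sum w S = 0"
  shows "(\<Sum>q\<in>S. \<bar>\<Sum>p\<in>S. w p * A p q\<bar>) \<le> (1 - d * card S) * (\<Sum>p\<in>S. \<bar>w p\<bar>)"
proof -
  have e: "(\<Sum>p\<in>S. w p * A p q) = (\<Sum>p\<in>S. w p * (A p q - d))" for q
  proof -
    have "(\<Sum>p\<in>S. w p * (A p q - d)) = (\<Sum>p\<in>S. w p * A p q) - (\<Sum>p\<in>S. w p) * d"
      by (simp add: algebra_simps sum_subtractf sum_distrib_right sum_distrib_left)
    thus ?thesis using w0 by simp
  qed
  have "(\<Sum>q\<in>S. \<bar>\<Sum>p\<in>S. w p * A p q\<bar>) \<le> (\<Sum>q\<in>S. \<Sum>p\<in>S. \<bar>w p\<bar> * (A p q - d))"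
  proof (rule sum_mono)
    fix q assume q: "q \<in> S"
    have "\<bar>\<Sum>p\<in>S. w p * (A p q - d)\<bar> \<le> (\<Sum>p\<in>S. \<bar>w p * (A p q - d)\<bar>)" by (rule sum_abs)
    also have "\<dots> = (\<Sum>p\<in>S. \<bar>w p\<bar> * (A p q - d))"
      by (rule sum.cong) (use pos q in \<open>auto simp: abs_mult\<close>)
    finally show "\<bar>\<Sum>p\<in>S. w p * A p q\<bar> \<le> (\<Sum>p\<in>S. \<bar>w p\<bar> * (A p q - d))" using e by simp
  qed
  also have "\<dots> = (\<Sum>p\<in>S. \<Sum>q\<in>S. \<bar>w p\<bar> * (A p q - d))" by (rule sum.swap)
  also have "\<dots> = (\<Sum>p\<in>S. \<bar>w p\<bar> * (1 - d * card S))"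
  proof (rule sum.cong)
    fix p assume p: "p \<in> S"
    have "(\<Sum>q\<in>S. \<bar>w p\<bar> * (A p q - d)) = \<bar>w p\<bar> * ((\<Sum>q\<in>S. A p q) - d * card S)"
      by (simp add: sum_distrib_left[symmetric] sum_subtractf)
    thus "(\<Sum>q\<in>S. \<bar>w p\<bar> * (A p q - d)) = \<bar>w p\<bar> * (1 - d * card S)" using rows p by simp
  qed simp
  also have "\<dots> = (1 - d * card S) * (\<Sum>p\<in>S. \<bar>w p\<bar>)" by (simp add: sum_distrib_right mult.commute)
  finally show ?thesis .
qed

lemma di_sum:
  assumes "\<And>p. p\<in>S \<Longrightarrow> (\<Sum>q\<in>S. A p q) = 1" "finite S"
  shows "sum (dist_iter S A mu0 n) S = sum mu0 S"
proof (induction n)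
  case (Suc n)
  have "sum (dist_iter S A mu0 (Suc n)) S = (\<Sum>q\<in>S. \<Sum>p\<in>S. dist_iter S A mu0 n p * A p q)" by simp
  also have "\<dots> = (\<Sum>p\<in>S. \<Sum>q\<in>S. dist_iter S A mu0 n p * A p q)" by (rule sum.swap)
  also have "\<dots> = (\<Sum>p\<in>S. dist_iter S A mu0 n p)"
    by (rule sum.cong) (simp_all add: sum_distrib_left[symmetric] assms)
  finally show ?case using Suc by simp
qed simp

lemma di_shift: "dist_iter S A mu0 (n + k) = dist_iter S A (dist_iter S A mu0 k) n"
proof (induction n)
  case (Suc n)
  have "dist_iter S A mu0 (Suc n + k) = dist_iter S A mu0 (Suc (n + k))" by simp
  also have "\<dots> = dist_iter S A (dist_iter S A mu0 k) (Suc n)"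
    by (simp only: dist_iter.simps Suc)
  finally show ?case .
qed simp

lemma di_stat: assumes "stationary S A mu" shows "dist_iter S A mu n = mu"
  using assms by (induction n) (auto simp: stationary_def is_dist_def fun_eq_iff)

lemma di_out: "q \<notin> S \<Longrightarrow> dist_iter S A mu0 (Suc n) q = 0" by simp

lemma di_nonneg:
  assumes "\<And>p q. p\<in>S \<Longrightarrow> q\<in>S \<Longrightarrow> 0 \<le> A p q" "\<And>p. 0 \<le> mu0 p"
  shows "0 \<le> dist_iter S A mu0 n q"
  using assms by (induction n arbitrary: q) (auto intro!: sum_nonneg)

lemma di_contr:
  fixes S :: "'p set"
  assumes fin: "finite S" and pos: "\<And>p q. p\<in>S \<Longrightarrow> q\<in>S \<Longrightarrow> d \<le> A p q"
    and rows: "\<And>p. p\<in>S \<Longrightarrow> (\<Sum>q\<in>S. A p q) = 1"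
    and eq: "sum mu0 S = sum nu0 S"
  shows "(\<Sum>q\<in>S. \<bar>dist_iter S A mu0 n q - dist_iter S A nu0 n q\<bar>)
     \<le> (1 - d * card S)^n * (\<Sum>q\<in>S. \<bar>mu0 q - nu0 q\<bar>)"
proof (induction n)
  case 0 then show ?case by simp
next
  case (Suc n)
  let ?w = "\<lambda>p. dist_iter S A mu0 n p - dist_iter S A nu0 n p"
  have w0: "sum ?w S = 0" using di_sum[OF rows fin] eq by (simp add: sum_subtractf)
  have "(\<Sum>q\<in>S. \<bar>dist_iter S A mu0 (Suc n) q - dist_iter S A nu0 (Suc n) q\<bar>)
      = (\<Sum>q\<in>S. \<bar>\<Sum>p\<in>S. ?w p * A p q\<bar>)"
    by (rule sum.cong) (simp_all add: sum_subtractf[symmetric] left_diff_distrib)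
  also have "\<dots> \<le> (1 - d * card S) * (\<Sum>p\<in>S. \<bar>?w p\<bar>)" by (rule contr[OF fin pos rows w0])
  also have "\<dots> \<le> (1 - d * card S) * ((1 - d * card S)^n * (\<Sum>q\<in>S. \<bar>mu0 q - nu0 q\<bar>))"
  proof (rule mult_left_mono[OF Suc])
    show "0 \<le> 1 - d * real (card S)"
    proof (cases "S = {}")
      case False
      then obtain p where p: "p \<in> S" by auto
      have "(\<Sum>q\<in>S. d) \<le> (\<Sum>q\<in>S. A p q)" by (rule sum_mono) (use pos p in auto)
      thus ?thesis using rows[OF p] by (simp add: mult.commute)
    qed simp
  qed
  finally show ?case by simp
qed

lemma di_out0:
  assumes "\<And>p. p \<notin> S \<Longrightarrow> mu0 p = 0" "q \<notin> S"
  shows "dist_iter S A mu0 n q = 0"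
  using assms by (cases n) auto

lemma markov:
  fixes S :: "'p set"
  assumes fin: "finite S" and ne: "S \<noteq> {}" and dpos: "0 < d"
    and pos: "\<And>p q. p\<in>S \<Longrightarrow> q\<in>S \<Longrightarrow> d \<le> A p q"
    and rows: "\<And>p. p\<in>S \<Longrightarrow> (\<Sum>q\<in>S. A p q) = 1"
  shows "(\<exists>!mu. stationary S A mu) \<and>
     (\<forall>mu0 mu. is_dist S mu0 \<longrightarrow> stationary S A mu \<longrightarrow>
        (\<forall>p. (\<lambda>n. dist_iter S A mu0 n p) \<longlonglongrightarrow> mu p))"
proof -
  define r where "r = 1 - d * card S"
  have cS: "card S \<ge> 1" using fin ne by (simp add: Suc_leI card_gt_0_iff)
  have r0: "0 \<le> r"
  proof -
    obtain p where p: "p \<in> S" using ne by auto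
    have "(\<Sum>q\<in>S. d) \<le> (\<Sum>q\<in>S. A p q)" by (rule sum_mono) (use pos p in auto)
    thus ?thesis using rows[OF p] by (simp add: r_def mult.commute)
  qed
  have r1: "r < 1"
  proof -
    have "0 < d * card S" using dpos cS by simp
    thus ?thesis by (simp add: r_def)
  qed
  have nnA: "\<And>p q. p\<in>S \<Longrightarrow> q\<in>S \<Longrightarrow> 0 \<le> A p q" using pos dpos by (meson less_le_trans less_le)
  have rpow: "(\<lambda>n. r ^ n) \<longlonglongrightarrow> 0" using r0 r1 by (intro LIMSEQ_power_zero) simp
  have conv: "\<forall>p. (\<lambda>n. dist_iter S A mu0 n p) \<longlonglongrightarrow> mu p"
    if m0: "is_dist S mu0" and st: "stationary S A mu" for mu0 mu
  proof
    fix p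
    show "(\<lambda>n. dist_iter S A mu0 n p) \<longlonglongrightarrow> mu p"
    proof (cases "p \<in> S")
      case True
      let ?C = "\<Sum>q\<in>S. \<bar>mu0 q - mu q\<bar>"
      have eq: "sum mu0 S = sum mu S" using m0 st by (simp add: is_dist_def stationary_def)
      have b: "norm (dist_iter S A mu0 n p - mu p) \<le> r ^ n * ?C" for n
      proof -
        have "norm (dist_iter S A mu0 n p - mu p) = \<bar>dist_iter S A mu0 n p - dist_iter S A mu n p\<bar>"
          using di_stat[OF st] by simp
        also have "\<dots> \<le> (\<Sum>q\<in>S. \<bar>dist_iter S A mu0 n q - dist_iter S A mu n q\<bar>)"
          by (rule member_le_sum) (use True fin in auto)
        also have "\<dots> \<le> r ^ n * ?C" unfolding r_def by (rule di_contr[OF fin pos rows eq])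
        finally show ?thesis .
      qed
      have "(\<lambda>n. dist_iter S A mu0 n p - mu p) \<longlonglongrightarrow> 0"
        by (rule Lim_null_comparison[OF _ tendsto_mult_right_zero[OF rpow, of ?C]]) (use b in \<open>auto simp: mult.commute\<close>)
      thus ?thesis by (rule LIM_zero_cancel)
    next
      case False
      have "dist_iter S A mu0 n p = 0" for n
        by (rule di_out0) (use m0 False in \<open>auto simp: is_dist_def\<close>)
      moreover have "mu p = 0" using st False by (simp add: stationary_def is_dist_def)
      ultimately show ?thesis by simp
    qed
  qed
  obtain p0 where p0: "p0 \<in> S" using ne by auto
  define mu0 where "mu0 = (\<lambda>p. if p = p0 then 1 else (0::real))"
  have m0: "is_dist S mu0" using p0 fin by (simp add: is_dist_def mu0_def)
  have m0out: "\<And>p. p \<notin> S \<Longrightarrow> mu0 p = 0" using p0 by (auto simp: mu0_def)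
  have nn: "0 \<le> dist_iter S A mu0 n q" for n q
    by (rule di_nonneg) (use nnA in \<open>auto simp: mu0_def\<close>)
  have sum1: "sum (dist_iter S A mu0 n) S = 1" for n
    using di_sum[OF rows fin] m0 by (simp add: is_dist_def)
  have bnd: "\<bar>dist_iter S A mu0 m p - dist_iter S A mu0 n p\<bar> \<le> 2 * r ^ n" if "n \<le> m" for m n p
  proof (cases "p \<in> S")
    case False
    thus ?thesis using di_out0[OF m0out False] r0 by simp
  next
    case True
    let ?nu = "dist_iter S A mu0 (m - n)"
    have m: "m = n + (m - n)" using that by simp
    have eq: "sum ?nu S = sum mu0 S" using sum1 m0 by (simp add: is_dist_def)
    have "\<bar>dist_iter S A mu0 m p - dist_iter S A mu0 n p\<bar>
        = \<bar>dist_iter S A ?nu n p - dist_iter S A mu0 n p\<bar>"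
      using di_shift[of S A mu0 n "m - n"] m by metis
    also have "\<dots> \<le> (\<Sum>q\<in>S. \<bar>dist_iter S A ?nu n q - dist_iter S A mu0 n q\<bar>)"
      by (rule member_le_sum) (use True fin in auto)
    also have "\<dots> \<le> r ^ n * (\<Sum>q\<in>S. \<bar>?nu q - mu0 q\<bar>)" unfolding r_def by (rule di_contr[OF fin pos rows eq])
    also have "(\<Sum>q\<in>S. \<bar>?nu q - mu0 q\<bar>) \<le> (\<Sum>q\<in>S. ?nu q + mu0 q)"
      proof (rule sum_mono)
      fix q have "0 \<le> ?nu q" by (rule nn)
      moreover have "0 \<le> mu0 q" by (simp add: mu0_def)
      ultimately show "\<bar>?nu q - mu0 q\<bar> \<le> ?nu q + mu0 q" by linarith
    qed
    also have "\<dots> = 2" using sum1[of "m - n"] m0 by (simp add: sum.distrib is_dist_def)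
    finally show ?thesis using r0 by (simp add: mult_right_mono mult.commute)
  qed
  have cauchy: "Cauchy (\<lambda>n. dist_iter S A mu0 n p)" for p
  proof (rule metric_CauchyI)
    fix e :: real assume e: "0 < e"
    obtain M where M: "r ^ M < e / 2" using real_arch_pow_inv[of "e/2" r] e r1 by auto
    have "dist (dist_iter S A mu0 m p) (dist_iter S A mu0 n p) < e" if "M \<le> m" "M \<le> n" for m n
    proof -
      have k: "\<bar>dist_iter S A mu0 a p - dist_iter S A mu0 b p\<bar> < e" if "b \<le> a" "M \<le> b" for a b
      proof -
        have "r ^ b \<le> r ^ M" using that r0 r1 by (intro power_decreasing) auto
        thus ?thesis using bnd[OF \<open>b \<le> a\<close>, of p] M by linarith
      qed
      show ?thesis
      proof (cases "n \<le> m")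
        case True thus ?thesis using k[OF True that(2)] by (simp add: dist_real_def)
      next
        case False
        hence "\<bar>dist_iter S A mu0 n p - dist_iter S A mu0 m p\<bar> < e" using k[of m n] that by simp
        thus ?thesis by (simp add: dist_real_def abs_minus_commute)
      qed
    qed
    thus "\<exists>M. \<forall>m\<ge>M. \<forall>n\<ge>M. dist (dist_iter S A mu0 m p) (dist_iter S A mu0 n p) < e" by blast
  qed
  define mu where "mu = (\<lambda>p. lim (\<lambda>n. dist_iter S A mu0 n p))"
  have lim: "(\<lambda>n. dist_iter S A mu0 n p) \<longlonglongrightarrow> mu p" for p
    using cauchy[of p] unfolding mu_def by (simp add: Cauchy_convergent_iff convergent_LIMSEQ_iff)
  have st: "stationary S A mu"
    unfolding stationary_def is_dist_def
  proof (intro conjI allI impI ballI)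
    fix p show "0 \<le> mu p" by (rule LIMSEQ_le_const[OF lim]) (use nn in auto)
  next
    fix p assume pS: "p \<notin> S"
    have "dist_iter S A mu0 n p = 0" for n by (rule di_out0) (use m0out pS in auto)
    hence "(\<lambda>n. dist_iter S A mu0 n p) = (\<lambda>n. 0)" by auto
    thus "mu p = 0" using lim[of p] by (metis LIMSEQ_unique tendsto_const)
  next
    have "(\<lambda>n. sum (dist_iter S A mu0 n) S) \<longlonglongrightarrow> sum mu S" by (intro tendsto_sum lim)
    thus "sum mu S = 1" using sum1 by (simp add: LIMSEQ_const_iff)
  next
    fix q assume q: "q \<in> S"
    have "(\<lambda>n. dist_iter S A mu0 (Suc n) q) \<longlonglongrightarrow> mu q" using lim by (rule LIMSEQ_Suc)
    moreover have "(\<lambda>n. dist_iter S A mu0 (Suc n) q) \<longlonglongrightarrow> (\<Sum>p\<in>S. mu p * A p q)"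
      using q by (simp, intro tendsto_sum tendsto_mult_right lim)
    ultimately show "(\<Sum>p\<in>S. mu p * A p q) = mu q" using LIMSEQ_unique by blast
  qed
  have uniq: "nu = mu'" if "stationary S A nu" "stationary S A mu'" for nu mu'
  proof
    fix p
    have "(\<lambda>n. dist_iter S A nu n p) \<longlonglongrightarrow> mu' p"
      using conv[of nu mu'] that by (simp add: stationary_def)
    thus "nu p = mu' p" using di_stat[OF that(1)] by (simp add: LIMSEQ_const_iff)
  qed
  show ?thesis using st uniq conv by blast
qed



lemma Pol_PiE: "Pol Us i = Pi\<^sub>E (UNIV :: 'x set) (\<lambda>_. Us i)"
  by (auto simp: Pol_def PiE_def Pi_def extensional_def)

lemma prod_ge_one_minus_sum:
  fixes g :: "nat \<Rightarrow> real"
  assumes "finite I" "\<And>i. i \<in> I \<Longrightarrow> 0 \<le> g i \<and> g i \<le> 1"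
  shows "1 - sum g I \<le> (\<Prod>i\<in>I. 1 - g i)"
  using assms
proof (induction I rule: finite_induct)
  case (insert a I)
  have IH: "1 - sum g I \<le> (\<Prod>i\<in>I. 1 - g i)" using insert by auto
  have ga: "0 \<le> g a" "g a \<le> 1" using insert by auto
  have sI: "0 \<le> sum g I" using insert by (intro sum_nonneg) auto
  have "(1 - g a) * (1 - sum g I) \<le> (1 - g a) * (\<Prod>i\<in>I. 1 - g i)"
    using IH ga by (intro mult_left_mono) auto
  moreover have "1 - sum g (insert a I) \<le> (1 - g a) * (1 - sum g I)"
    using insert ga sI by (simp add: algebra_simps)
  ultimately show ?case using insert by simp
qed simp

context
  fixes N :: nat and Us :: "nat \<Rightarrow> 'u set" and beta :: "nat \<Rightarrow> real"
    and c :: "nat \<Rightarrow> 'x::finite \<Rightarrow> (nat \<Rightarrow> 'u) \<Rightarrow> real"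
    and P :: "'x \<Rightarrow> (nat \<Rightarrow> 'u) \<Rightarrow> 'x \<Rightarrow> real"
  assumes game: "finite_game N Us beta P"
begin

lemma finPol: "i < N \<Longrightarrow> finite (Pol Us i :: ('x \<Rightarrow> 'u) set)"
  using game unfolding Pol_PiE finite_game_def by (intro finite_PiE) auto

lemma nePol: "i < N \<Longrightarrow> (Pol Us i :: ('x \<Rightarrow> 'u) set) \<noteq> {}"
  using game unfolding Pol_PiE finite_game_def by (auto simp: PiE_eq_empty_iff)

lemma cardPol: "i < N \<Longrightarrow> 0 < real (card (Pol Us i :: ('x \<Rightarrow> 'u) set))"
  using finPol nePol by (simp add: card_gt_0_iff)

lemma finPis: "finite (Pis N Us :: (nat \<Rightarrow> 'x \<Rightarrow> 'u) set)"
  unfolding Pis_def using finPol by (intro finite_PiE) auto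

lemma Pis_mem: "p \<in> Pis N Us \<Longrightarrow> i < N \<Longrightarrow> p i \<in> Pol Us i"
  by (auto simp: Pis_def)

lemma Pis_upd: "p \<in> Pis N Us \<Longrightarrow> i < N \<Longrightarrow> s \<in> Pol Us i \<Longrightarrow> p(i := s) \<in> Pis N Us"
  by (auto simp: Pis_def PiE_def Pi_def extensional_def)

lemma opt_BR:
  assumes p: "p \<in> Pi_opt N Us beta c P" and i: "i < N"
  shows "p i \<in> BR Us beta c P i p"
proof -
  have pS: "p \<in> Pis N Us" using p by (simp add: Pi_opt_def)
  have le: "J beta c P i p x \<le> J beta c P i q x" if "q \<in> Pis N Us" for q x
  proof -
    have "J beta c P i p x = (INF q \<in> Pis N Us. J beta c P i q x)" using p i by (simp add: Pi_opt_def)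
    also have "\<dots> \<le> J beta c P i q x"
      by (rule cINF_lower) (use that finPis in \<open>auto intro: bdd_below_finite\<close>)
    finally show ?thesis .
  qed
  have "J beta c P i (p(i := p i)) x = (MIN s' \<in> Pol Us i. J beta c P i (p(i := s')) x)" for x
  proof -
    have "(MIN s' \<in> Pol Us i. J beta c P i (p(i := s')) x) = J beta c P i p x"
    proof (rule Min_eqI)
      show "finite ((\<lambda>s'. J beta c P i (p(i := s')) x) ` Pol Us i)" using finPol i by simp
      show "J beta c P i p x \<in> (\<lambda>s'. J beta c P i (p(i := s')) x) ` Pol Us i"
        using Pis_mem[OF pS i] by (intro image_eqI[where x="p i"]) auto
    qed (use le Pis_upd[OF pS i] in auto)
    thus ?thesis by simp
  qed
  thus ?thesis using Pis_mem[OF pS i] by (simp add: BR_def)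
qed

lemma BR_sub: "BR Us beta c P i p \<subseteq> Pol Us i"
  by (auto simp: BR_def)

context
  fixes lam gam kap :: "nat \<Rightarrow> real" and h :: "nat \<Rightarrow> ('x \<Rightarrow> 'u) \<Rightarrow> ('x \<Rightarrow> 'u) set \<Rightarrow> ('x \<Rightarrow> 'u) \<Rightarrow> real"
  assumes par: "\<forall>i<N. 0 \<le> lam i \<and> lam i \<le> 1 \<and> 0 < gam i \<and> gam i < 1 \<and> 0 < kap i \<and> kap i < 1
                   \<and> stoch_kernel (Pol Us i) (h i)"
begin

lemma pl_opt:
  assumes "p \<in> Pi_opt N Us beta c P" "i < N"
  shows "IUP_player N Us beta c P lam gam kap h i p s =
    (1 - gam i) * (if s = p i then 1 else 0) + gam i / real (card (Pol Us i :: ('x \<Rightarrow> 'u) set))"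
  using assms opt_BR[OF assms] by (simp add: IUP_player_def Rin_def)

lemma pl_nopt:
  assumes "p \<notin> Pi_opt N Us beta c P"
  shows "IUP_player N Us beta c P lam gam kap h i p s =
    (1 - kap i) * h i (p i) (BR Us beta c P i p) s + kap i / real (card (Pol Us i :: ('x \<Rightarrow> 'u) set))"
  using assms by (simp add: IUP_player_def)

lemma pl_sum:
  assumes p: "p \<in> Pis N Us" and i: "i < N"
  shows "(\<Sum>s\<in>Pol Us i. IUP_player N Us beta c P lam gam kap h i p s) = 1"
proof (cases "p \<in> Pi_opt N Us beta c P")
  case True
  have "(\<Sum>s\<in>Pol Us i. IUP_player N Us beta c P lam gam kap h i p s)
     = (1 - gam i) * (\<Sum>s\<in>Pol Us i. (if s = p i then 1 else 0))
       + real (card (Pol Us i :: ('x \<Rightarrow> 'u) set)) * (gam i / real (card (Pol Us i :: ('x \<Rightarrow> 'u) set)))"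
    using pl_opt[OF True i] by (simp add: sum.distrib sum_distrib_left)
  also have "\<dots> = 1" using Pis_mem[OF p i] finPol[OF i] cardPol[OF i] by auto
  finally show ?thesis .
next
  case False
  have sk: "stoch_kernel (Pol Us i) (h i)" using par i by auto
  have hs: "(\<Sum>s\<in>Pol Us i. h i (p i) (BR Us beta c P i p) s) = 1"
    using sk Pis_mem[OF p i] BR_sub unfolding stoch_kernel_def by blast
  have "(\<Sum>s\<in>Pol Us i. IUP_player N Us beta c P lam gam kap h i p s)
     = (1 - kap i) * (\<Sum>s\<in>Pol Us i. h i (p i) (BR Us beta c P i p) s)
       + real (card (Pol Us i :: ('x \<Rightarrow> 'u) set)) * (kap i / real (card (Pol Us i :: ('x \<Rightarrow> 'u) set)))"
    using pl_nopt[OF False] by (simp add: sum.distrib sum_distrib_left)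
  also have "\<dots> = 1" using hs cardPol[OF i] by simp
  finally show ?thesis .
qed

lemma pl_lb:
  assumes p: "p \<in> Pis N Us" and i: "i < N" and s: "s \<in> Pol Us i"
  shows "(if p \<in> Pi_opt N Us beta c P then gam i else kap i) / real (card (Pol Us i :: ('x \<Rightarrow> 'u) set))
          \<le> IUP_player N Us beta c P lam gam kap h i p s"
proof (cases "p \<in> Pi_opt N Us beta c P")
  case True
  have "0 \<le> (1 - gam i) * (if s = p i then 1 else 0)" using par i by auto
  thus ?thesis using pl_opt[OF True i] True by simp
next
  case False
  have sk: "stoch_kernel (Pol Us i) (h i)" using par i by auto
  have "0 \<le> h i (p i) (BR Us beta c P i p) s"
    using sk Pis_mem[OF p i] BR_sub s unfolding stoch_kernel_def by blast
  hence "0 \<le> (1 - kap i) * h i (p i) (BR Us beta c P i p) s" using par i by auto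
  thus ?thesis using pl_nopt[OF False] False by simp
qed

lemma pl_diag:
  assumes p: "p \<in> Pi_opt N Us beta c P" and i: "i < N"
  shows "1 - gam i \<le> IUP_player N Us beta c P lam gam kap h i p (p i)"
  using pl_opt[OF p i] cardPol[OF i] par i by (simp add: divide_nonneg_pos less_imp_le)

lemma rowsum:
  assumes p: "p \<in> Pis N Us"
  shows "(\<Sum>q\<in>Pis N Us. IUP_matrix N Us beta c P lam gam kap h p q) = 1"
proof -
  have "(\<Sum>q\<in>Pis N Us. IUP_matrix N Us beta c P lam gam kap h p q)
     = (\<Prod>i<N. \<Sum>s\<in>Pol Us i. IUP_player N Us beta c P lam gam kap h i p s)"
    unfolding IUP_matrix_def Pis_def by (rule prod_sum_PiE[symmetric]) (auto intro: finPol)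
  also have "\<dots> = 1" using pl_sum[OF p] by simp
  finally show ?thesis .
qed

definition dmin where "dmin = (\<Prod>i<N. min (gam i) (kap i) / real (card (Pol Us i :: ('x \<Rightarrow> 'u) set)))"

lemma dmin_pos: "0 < dmin"
  unfolding dmin_def using par cardPol by (intro prod_pos) auto

lemma entry_lb:
  assumes p: "p \<in> Pis N Us" and q: "q \<in> Pis N Us"
  shows "dmin \<le> IUP_matrix N Us beta c P lam gam kap h p q"
  unfolding dmin_def IUP_matrix_def
proof (rule prod_mono)
  fix i assume "i \<in> {..<N}"
  hence i: "i < N" by simp
  have c: "0 < real (card (Pol Us i :: ('x \<Rightarrow> 'u) set))" by (rule cardPol[OF i])
  have "min (gam i) (kap i) / real (card (Pol Us i :: ('x \<Rightarrow> 'u) set))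
     \<le> (if p \<in> Pi_opt N Us beta c P then gam i else kap i) / real (card (Pol Us i :: ('x \<Rightarrow> 'u) set))"
    using c by (intro divide_right_mono) auto
  also have "\<dots> \<le> IUP_player N Us beta c P lam gam kap h i p (q i)"
    by (rule pl_lb[OF p i Pis_mem[OF q i]])
  finally show "0 \<le> min (gam i) (kap i) / real (card (Pol Us i :: ('x \<Rightarrow> 'u) set)) \<and>
     min (gam i) (kap i) / real (card (Pol Us i :: ('x \<Rightarrow> 'u) set)) \<le> IUP_player N Us beta c P lam gam kap h i p (q i)"
    using par i c by auto
qed

lemma entry_nopt:
  assumes p: "p \<in> Pis N Us" "p \<notin> Pi_opt N Us beta c P" and q: "q \<in> Pis N Us"
  shows "(\<Prod>i<N. kap i / real (card (Pol Us i :: ('x \<Rightarrow> 'u) set))) \<le> IUP_matrix N Us beta c P lam gam kap h p q"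
  unfolding IUP_matrix_def
proof (rule prod_mono)
  fix i assume "i \<in> {..<N}"
  hence i: "i < N" by simp
  have c: "0 < real (card (Pol Us i :: ('x \<Rightarrow> 'u) set))" by (rule cardPol[OF i])
  show "0 \<le> kap i / real (card (Pol Us i :: ('x \<Rightarrow> 'u) set)) \<and>
     kap i / real (card (Pol Us i :: ('x \<Rightarrow> 'u) set)) \<le> IUP_player N Us beta c P lam gam kap h i p (q i)"
    using pl_lb[OF p(1) i Pis_mem[OF q i]] p(2) par i c by auto
qed

lemma entry_diag:
  assumes p: "p \<in> Pi_opt N Us beta c P"
  shows "1 - (\<Sum>i<N. gam i) \<le> IUP_matrix N Us beta c P lam gam kap h p p"
proof -
  have "1 - (\<Sum>i<N. gam i) \<le> (\<Prod>i<N. 1 - gam i)"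
    using par by (intro prod_ge_one_minus_sum) auto
  also have "\<dots> \<le> IUP_matrix N Us beta c P lam gam kap h p p"
    unfolding IUP_matrix_def using pl_diag[OF p] par by (intro prod_mono) auto
  finally show ?thesis .
qed

lemma exists_d: "\<exists>d>0. \<forall>p\<in>Pis N Us. \<forall>q\<in>Pis N Us. d \<le> IUP_matrix N Us beta c P lam gam kap h p q"
  using dmin_pos entry_lb by blast

lemma nnA: "p \<in> Pis N Us \<Longrightarrow> q \<in> Pis N Us \<Longrightarrow> 0 \<le> IUP_matrix N Us beta c P lam gam kap h p q"
  using dmin_pos entry_lb by (meson less_le_trans less_le)

lemma opt_mass:
  assumes st: "stationary (Pis N Us) (IUP_matrix N Us beta c P lam gam kap h) mu"
    and ne: "Pi_opt N Us beta c P \<noteq> {}"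
  shows "(\<Prod>i<N. kap i / real (card (Pol Us i :: ('x \<Rightarrow> 'u) set))) * (1 - (\<Sum>p\<in>Pi_opt N Us beta c P. mu p))
         \<le> (\<Sum>i<N. gam i)"
proof -
  define S where "S = (Pis N Us :: (nat \<Rightarrow> 'x \<Rightarrow> 'u) set)"
  define K where "K = Pi_opt N Us beta c P"
  define A where "A = IUP_matrix N Us beta c P lam gam kap h"
  define del where "del = (\<Prod>i<N. kap i / real (card (Pol Us i :: ('x \<Rightarrow> 'u) set)))"
  define G where "G = (\<Sum>i<N. gam i)"
  have KS: "K \<subseteq> S" by (auto simp: K_def S_def Pi_opt_def)
  have finS: "finite S" using finPis by (simp add: S_def)
  have finK: "finite K" using KS finS finite_subset by blast
  obtain ps where ps: "ps \<in> K" using ne K_def by auto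
  have mu0: "\<And>p. 0 \<le> mu p" and mu1: "sum mu S = 1"
    and stq: "\<And>q. q \<in> S \<Longrightarrow> (\<Sum>p\<in>S. mu p * A p q) = mu q"
    using st by (auto simp: stationary_def is_dist_def S_def A_def)
  have nA: "\<And>p q. p \<in> S \<Longrightarrow> q \<in> S \<Longrightarrow> 0 \<le> A p q" using nnA by (simp add: S_def A_def)
  define a where "a = sum mu K"
  define b where "b = sum mu (S - K)"
  have ab: "a + b = 1" using sum.subset_diff[OF KS finS, of mu] mu1 by (simp add: a_def b_def)
  have b0: "0 \<le> b" unfolding b_def using mu0 by (simp add: sum_nonneg)
  have G0: "0 \<le> G" unfolding G_def using par by (intro sum_nonneg) (simp add: less_imp_le)
  define X where "X p = (\<Sum>q\<in>K. A p q)" for p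
  have "a = (\<Sum>q\<in>K. \<Sum>p\<in>S. mu p * A p q)" unfolding a_def
    by (rule sum.cong) (use stq KS in auto)
  also have "\<dots> = (\<Sum>p\<in>S. \<Sum>q\<in>K. mu p * A p q)" by (rule sum.swap)
  also have "\<dots> = (\<Sum>p\<in>S. mu p * X p)" by (simp add: X_def sum_distrib_left)
  also have "\<dots> = (\<Sum>p\<in>S - K. mu p * X p) + (\<Sum>p\<in>K. mu p * X p)"
    by (rule sum.subset_diff[OF KS finS])
  finally have aeq: "a = (\<Sum>p\<in>S - K. mu p * X p) + (\<Sum>p\<in>K. mu p * X p)" .
  have "(\<Sum>p\<in>K. mu p * (1 - G)) \<le> (\<Sum>p\<in>K. mu p * X p)"
  proof (rule sum_mono)
    fix p assume p: "p \<in> K"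
    have "1 - G \<le> A p p" using entry_diag p by (simp add: G_def A_def K_def)
    also have "A p p \<le> X p" unfolding X_def
      by (rule member_le_sum) (use p finK KS nA in auto)
    finally show "mu p * (1 - G) \<le> mu p * X p" using mu0 by (intro mult_left_mono) auto
  qed
  moreover have "(\<Sum>p\<in>S - K. mu p * del) \<le> (\<Sum>p\<in>S - K. mu p * X p)"
  proof (rule sum_mono)
    fix p assume p: "p \<in> S - K"
    have "del \<le> A p ps" using entry_nopt[of p ps] p ps KS by (auto simp: del_def A_def K_def S_def)
    also have "A p ps \<le> X p" unfolding X_def
      by (rule member_le_sum) (use ps finK KS nA p in auto)
    finally show "mu p * del \<le> mu p * X p" using mu0 by (intro mult_left_mono) auto
  qed
  moreover have "(\<Sum>p\<in>K. mu p * (1 - G)) = a * (1 - G)" by (simp add: a_def sum_distrib_right)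
  moreover have "(\<Sum>p\<in>S - K. mu p * del) = b * del" by (simp add: b_def sum_distrib_right)
  ultimately have "b * del + a * (1 - G) \<le> a"
    using aeq by linarith
  hence "del * b \<le> G * a" by (simp add: algebra_simps)
  also have "G * a \<le> G" using G0 ab b0 by (simp add: mult_left_le)
  finally have "del * b \<le> G" .
  moreover have "b = 1 - sum mu K" using ab a_def by simp
  ultimately show ?thesis by (simp add: del_def G_def K_def)
qed

end
end


lemma part1:

  fixes N :: nat and Us :: "nat \<Rightarrow> 'u set" and beta :: "nat \<Rightarrow> real"
    and c :: "nat \<Rightarrow> 'x::finite \<Rightarrow> (nat \<Rightarrow> 'u) \<Rightarrow> real"
    and P :: "'x \<Rightarrow> (nat \<Rightarrow> 'u) \<Rightarrow> 'x \<Rightarrow> real"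
  assumes game: "finite_game N Us beta P"
    and ci: "common_interest N Us beta c P"
  shows "\<forall>lam gam kap h.
            (\<forall>i<N. 0 \<le> lam i \<and> lam i \<le> 1 \<and> 0 < gam i \<and> gam i < 1 \<and> 0 < kap i \<and> kap i < 1
                   \<and> stoch_kernel (Pol Us i) (h i)) \<longrightarrow>
            (\<exists>!mu. stationary (Pis N Us) (IUP_matrix N Us beta c P lam gam kap h) mu) \<and>
            (\<forall>mu0 mu. is_dist (Pis N Us) mu0 \<longrightarrow>
                stationary (Pis N Us) (IUP_matrix N Us beta c P lam gam kap h) mu \<longrightarrow>
                (\<forall>p. (\<lambda>n. dist_iter (Pis N Us) (IUP_matrix N Us beta c P lam gam kap h) mu0 n p)
                        \<longlonglongrightarrow> mu p))"
proof -
  have ne: "Pi_opt N Us beta c P \<noteq> {}" using ci unfolding common_interest_def by (rule conjunct1)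
  have sub: "Pi_opt N Us beta c P \<subseteq> Pis N Us" unfolding Pi_opt_def by (rule Collect_restrict)
  have neS: "(Pis N Us :: (nat \<Rightarrow> 'x \<Rightarrow> 'u) set) \<noteq> {}" using ne sub by blast
  show ?thesis
  proof (intro allI impI)
    fix lam gam kap :: "nat \<Rightarrow> real"
      and h :: "nat \<Rightarrow> ('x \<Rightarrow> 'u) \<Rightarrow> ('x \<Rightarrow> 'u) set \<Rightarrow> ('x \<Rightarrow> 'u) \<Rightarrow> real"
    assume par: "\<forall>i<N. 0 \<le> lam i \<and> lam i \<le> 1 \<and> 0 < gam i \<and> gam i < 1 \<and> 0 < kap i \<and> kap i < 1
                   \<and> stoch_kernel (Pol Us i) (h i)"
    obtain d where d: "d > 0" "\<forall>p\<in>Pis N Us. \<forall>q\<in>Pis N Us. d \<le> IUP_matrix N Us beta c P lam gam kap h p q"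
      using exists_d[OF game par] by blast
    show "(\<exists>!mu. stationary (Pis N Us) (IUP_matrix N Us beta c P lam gam kap h) mu) \<and>
            (\<forall>mu0 mu. is_dist (Pis N Us) mu0 \<longrightarrow>
                stationary (Pis N Us) (IUP_matrix N Us beta c P lam gam kap h) mu \<longrightarrow>
                (\<forall>p. (\<lambda>n. dist_iter (Pis N Us) (IUP_matrix N Us beta c P lam gam kap h) mu0 n p)
                        \<longlonglongrightarrow> mu p))"
    proof -
      have pos: "\<And>p q. p\<in>Pis N Us \<Longrightarrow> q\<in>Pis N Us \<Longrightarrow> d \<le> IUP_matrix N Us beta c P lam gam kap h p q"
        using d(2) by blast
      have rows: "\<And>p. p\<in>Pis N Us \<Longrightarrow> (\<Sum>q\<in>Pis N Us. IUP_matrix N Us beta c P lam gam kap h p q) = 1"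
        by (rule rowsum[OF game par])
      show ?thesis by (rule markov[OF finPis[OF game] neS d(1) pos rows])
    qed
  qed
qed

lemma part2:

  fixes N :: nat and Us :: "nat \<Rightarrow> 'u set" and beta :: "nat \<Rightarrow> real"
    and c :: "nat \<Rightarrow> 'x::finite \<Rightarrow> (nat \<Rightarrow> 'u) \<Rightarrow> real"
    and P :: "'x \<Rightarrow> (nat \<Rightarrow> 'u) \<Rightarrow> 'x \<Rightarrow> real"
  assumes game: "finite_game N Us beta P"
    and ci: "common_interest N Us beta c P"
  shows "(\<forall>eps kap.0 < eps \<and> eps < 1 \<and> (\<forall>i<N. 0 < kap i \<and> kap i < 1) \<longrightarrow>
            (\<exists>gbar > 0. \<forall>lam gam h.
               (\<forall>i<N. 0 \<le> lam i \<and> lam i \<le> 1 \<and> 0 < gam i \<and> gam i < 1 \<and> gam i < gbar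
                      \<and> stoch_kernel (Pol Us i) (h i)) \<longrightarrow>
               (\<forall>mu. stationary (Pis N Us) (IUP_matrix N Us beta c P lam gam kap h) mu \<longrightarrow>
                  (\<Sum>p\<in>Pi_opt N Us beta c P. mu p) \<ge> 1 - eps / 2)))"
proof -
  have ne: "Pi_opt N Us beta c P \<noteq> {}" using ci unfolding common_interest_def by (rule conjunct1)
  have sub: "Pi_opt N Us beta c P \<subseteq> Pis N Us" unfolding Pi_opt_def by (rule Collect_restrict)
  have neS: "(Pis N Us :: (nat \<Rightarrow> 'x \<Rightarrow> 'u) set) \<noteq> {}" using ne sub by blast
  show ?thesis
  proof (intro allI impI)
    fix eps :: real and kap :: "nat \<Rightarrow> real"
    assume H: "0 < eps \<and> eps < 1 \<and> (\<forall>i<N. 0 < kap i \<and> kap i < 1)"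
    define del where "del = (\<Prod>i<N. kap i / real (card (Pol Us i :: ('x \<Rightarrow> 'u) set)))"
    have del0: "0 < del" unfolding del_def using H cardPol[OF game] by (intro prod_pos) auto
    define gbar where "gbar = eps * del / (2 * (real N + 1))"
    have g0: "0 < gbar" unfolding gbar_def using H del0 by auto
    have main: "\<forall>lam gam h.
               (\<forall>i<N. 0 \<le> lam i \<and> lam i \<le> 1 \<and> 0 < gam i \<and> gam i < 1 \<and> gam i < gbar
                      \<and> stoch_kernel (Pol Us i) (h i)) \<longrightarrow>
               (\<forall>mu. stationary (Pis N Us) (IUP_matrix N Us beta c P lam gam kap h) mu \<longrightarrow>
                  (\<Sum>p\<in>Pi_opt N Us beta c P. mu p) \<ge> 1 - eps / 2)"
    proof (intro allI impI)
      fix lam gam :: "nat \<Rightarrow> real"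
        and h :: "nat \<Rightarrow> ('x \<Rightarrow> 'u) \<Rightarrow> ('x \<Rightarrow> 'u) set \<Rightarrow> ('x \<Rightarrow> 'u) \<Rightarrow> real" and mu
      assume par': "\<forall>i<N. 0 \<le> lam i \<and> lam i \<le> 1 \<and> 0 < gam i \<and> gam i < 1 \<and> gam i < gbar
                      \<and> stoch_kernel (Pol Us i) (h i)"
        and st: "stationary (Pis N Us) (IUP_matrix N Us beta c P lam gam kap h) mu"
      have par: "\<forall>i<N. 0 \<le> lam i \<and> lam i \<le> 1 \<and> 0 < gam i \<and> gam i < 1 \<and> 0 < kap i \<and> kap i < 1
                   \<and> stoch_kernel (Pol Us i) (h i)" using par' H by simp
      define m where "m = (\<Sum>p\<in>Pi_opt N Us beta c P. mu p)"
      have om: "del * (1 - m) \<le> (\<Sum>i<N. gam i)"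
        using opt_mass[OF game par st ne] by (simp add: del_def m_def)
      have "(\<Sum>i<N. gam i) \<le> (\<Sum>i<N. gbar)" by (rule sum_mono) (use par' in auto)
      also have "\<dots> = real N * gbar" by simp
      also have "\<dots> = del * (real N * eps / (2 * (real N + 1)))" by (simp add: gbar_def)
      finally have "del * (1 - m) \<le> del * (real N * eps / (2 * (real N + 1)))" using om by linarith
      hence "1 - m \<le> real N * eps / (2 * (real N + 1))" using del0 by (rule mult_left_le_imp_le)
      also have "\<dots> = (real N / (real N + 1)) * (eps / 2)" by simp
      also have "\<dots> \<le> eps / 2"
        by (rule mult_left_le_one_le) (use H in auto)
      finally show "1 - eps / 2 \<le> m" by simp
    qed
    show "\<exists>gbar > 0. \<forall>lam gam h.
               (\<forall>i<N. 0 \<le> lam i \<and> lam i \<le> 1 \<and> 0 < gam i \<and> gam i < 1 \<and> gam i < gbar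
                      \<and> stoch_kernel (Pol Us i) (h i)) \<longrightarrow>
               (\<forall>mu. stationary (Pis N Us) (IUP_matrix N Us beta c P lam gam kap h) mu \<longrightarrow>
                  (\<Sum>p\<in>Pi_opt N Us beta c P. mu p) \<ge> 1 - eps / 2)" by (rule exI[of _ gbar], rule conjI[OF g0 main])
  qed
qed

theorem lemma2:
  fixes N :: nat and Us :: "nat \<Rightarrow> 'u set" and beta :: "nat \<Rightarrow> real"
    and c :: "nat \<Rightarrow> 'x::finite \<Rightarrow> (nat \<Rightarrow> 'u) \<Rightarrow> real"
    and P :: "'x \<Rightarrow> (nat \<Rightarrow> 'u) \<Rightarrow> 'x \<Rightarrow> real"
  assumes game: "finite_game N Us beta P"
    and ci: "common_interest N Us beta c P"
  shows "(\<forall>lam gam kap h.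
            (\<forall>i<N. 0 \<le> lam i \<and> lam i \<le> 1 \<and> 0 < gam i \<and> gam i < 1 \<and> 0 < kap i \<and> kap i < 1
                   \<and> stoch_kernel (Pol Us i) (h i)) \<longrightarrow>
            (\<exists>!mu. stationary (Pis N Us) (IUP_matrix N Us beta c P lam gam kap h) mu) \<and>
            (\<forall>mu0 mu. is_dist (Pis N Us) mu0 \<longrightarrow>
                stationary (Pis N Us) (IUP_matrix N Us beta c P lam gam kap h) mu \<longrightarrow>
                (\<forall>p. (\<lambda>n. dist_iter (Pis N Us) (IUP_matrix N Us beta c P lam gam kap h) mu0 n p)
                        \<longlonglongrightarrow> mu p)))
       \<and> (\<forall>eps kap. 0 < eps \<and> eps < 1 \<and> (\<forall>i<N. 0 < kap i \<and> kap i < 1) \<longrightarrow>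
            (\<exists>gbar > 0. \<forall>lam gam h.
               (\<forall>i<N. 0 \<le> lam i \<and> lam i \<le> 1 \<and> 0 < gam i \<and> gam i < 1 \<and> gam i < gbar
                      \<and> stoch_kernel (Pol Us i) (h i)) \<longrightarrow>
               (\<forall>mu. stationary (Pis N Us) (IUP_matrix N Us beta c P lam gam kap h) mu \<longrightarrow>
                  (\<Sum>p\<in>Pi_opt N Us beta c P. mu p) \<ge> 1 - eps / 2)))"
  using part1[OF game ci] part2[OF game ci] by (rule conjI)

end
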